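(* Let $(A,H,D,J)$ be a finite-dimensional real spectral triple, and with $D_0,D_1,D_R$ as in the context assume that $D_R$ commutes with every element of $A$. Then the 2nd order condition holds (i.e. every element of $\mathcal{C}\ell_D(A)$ commutes with every element of $\mathcal{C}\ell_D(A)^\circ$) if and only if $[D_0,D_1]=0$.
   Context: A finite-dimensional real spectral triple $(A,H,D,J)$ consists of a finite-dimensional complex Hilbert space $H$, a unital (real or complex) $*$-subalgebra $A\subseteq\mathrm{End}_{\mathbb{C}}(H)$, a selfadjoint operator $D$ on $H$, and an antilinear isometry $J$ with $J^2=\varepsilon1$, $JD=\varepsilon'DJ$ ($\varepsilon,\varepsilon'\in\{\pm1\}$; in the even case also $J\gamma=\varepsilon''\gamma J$ for a grading $\gamma$ commuting with $A$ and anticommuting with $D$), such that $[a,JbJ^{-1}]=0$ and $[[D,a],JbJ^{-1}]=0$ for all $a,b\in A$. Let $A_{\mathbb{C}}$ be the complex $*$-subalgebra generated by $A$, $A_{\mathbb{C}}\cong\bigoplus_{i=1}^N M_{n_i}(\mathbb{C})$, with $P_i$ the units of the summands; set $Q_j=JP_jJ^{-1}$, $D_{ij,kl}=P_iQ_jDP_kQ_l$, $D_0=\sum_{i\neq k}D_{ij,kj}$ (sum over $i,j,k$ with $i\ne k$), $D_1=\sum_{j\neq l}D_{ij,il}$ (sum over $i,j,l$ with $j\neq l$), $D_R=\sum_{i,j}D_{ij,ij}$. For $\xi\in\mathrm{End}_{\mathbb{C}}(H)$, $\xi^\circ=J\xi^*J^{-1}$, and $S^\circ=\{\xi^\circ:\xi\in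 S\}$. $\mathcal{C}\ell_D(A)$ is the complex $*$-subalgebra of $\mathrm{End}_{\mathbb{C}}(H)$ generated by $A$ and the operators $a[D,b]$, $a,b\in A$. *)

theory Defs
  imports "HOL-Analysis.Analysis"
begin

text \<open>The finite-dimensional complex Hilbert space H is modelled as complex^'n
(standard inner product; the norm on complex^'n is the l2 norm), with 'n an
arbitrary finite index type.\<close>

type_synonym 'n cop = "complex^'n^'n"
type_synonym 'n hvec = "complex^'n"

definition adj :: "'n::finite cop \<Rightarrow> 'n cop" where
  "adj M = (\<chi> i j. cnj (M $ j $ i))"

definition cscale :: "complex \<Rightarrow> 'n::finite cop \<Rightarrow> 'n cop" where
  "cscale c M = (\<chi> i j. c * M $ i $ j)"

definition commutator :: "'n::finite cop \<Rightarrow> 'n cop \<Rightarrow> 'n cop" where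
  "commutator a b = a ** b - b ** a"

definition antilinear_isometry :: "('n::finite hvec \<Rightarrow> 'n hvec) \<Rightarrow> bool" where
  "antilinear_isometry J \<longleftrightarrow>
     (\<forall>x y. J (x + y) = J x + J y) \<and>
     (\<forall>c x. J (c *s x) = cnj c *s J x) \<and>
     (\<forall>x. norm (J x) = norm x) \<and> bij J"

text \<open>J xi J^{-1} as an operator (a complex-linear map, given as a matrix).\<close>
definition Jconj :: "('n::finite hvec \<Rightarrow> 'n hvec) \<Rightarrow> 'n cop \<Rightarrow> 'n cop" where
  "Jconj J xi = matrix (\<lambda>x. J (xi *v (inv J x)))"

definition opp :: "('n::finite hvec \<Rightarrow> 'n hvec) \<Rightarrow> 'n cop \<Rightarrow> 'n cop" where
  "opp J xi = Jconj J (adj xi)"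

definition real_star_subalgebra :: "'n::finite cop set \<Rightarrow> bool" where
  "real_star_subalgebra A \<longleftrightarrow>
     mat 1 \<in> A \<and>
     (\<forall>a\<in>A. \<forall>b\<in>A. a + b \<in> A) \<and>
     (\<forall>r::real. \<forall>a\<in>A. r *\<^sub>R a \<in> A) \<and>
     (\<forall>a\<in>A. \<forall>b\<in>A. a ** b \<in> A) \<and>
     (\<forall>a\<in>A. adj a \<in> A)"

inductive_set star_alg_gen :: "'n::finite cop set \<Rightarrow> 'n cop set" for S where
  gen: "a \<in> S \<Longrightarrow> a \<in> star_alg_gen S"
| zero: "0 \<in> star_alg_gen S"
| add: "a \<in> star_alg_gen S \<Longrightarrow> b \<in> star_alg_gen S \<Longrightarrow> a + b \<in> star_alg_gen S"
| scale: "a \<in> star_alg_gen S \<Longrightarrow> cscale c a \<in> star_alg_gen S"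
| mult: "a \<in> star_alg_gen S \<Longrightarrow> b \<in> star_alg_gen S \<Longrightarrow> a ** b \<in> star_alg_gen S"
| adj: "a \<in> star_alg_gen S \<Longrightarrow> adj a \<in> star_alg_gen S"

text \<open>Finite-dimensional real spectral triple (A,H,D,J) with signs eps, eps';
  the optional grading gives the even case (with sign eps'').\<close>
definition real_spectral_triple ::
  "'n::finite cop set \<Rightarrow> 'n cop \<Rightarrow> ('n hvec \<Rightarrow> 'n hvec) \<Rightarrow> complex \<Rightarrow> complex
   \<Rightarrow> ('n cop \<times> complex) option \<Rightarrow> bool" where
  "real_spectral_triple A D J eps eps' grading \<longleftrightarrow>
     real_star_subalgebra A \<and>
     adj D = D \<and>
     antilinear_isometry J \<and>
     eps \<in> {1, -1} \<and> eps' \<in> {1, -1} \<and>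
     (\<forall>x. J (J x) = eps *s x) \<and>
     (\<forall>x. J (D *v x) = eps' *s (D *v J x)) \<and>
     (case grading of None \<Rightarrow> True
      | Some (g, eps'') \<Rightarrow> eps'' \<in> {1, -1} \<and> adj g = g \<and> g ** g = mat 1 \<and>
           (\<forall>a\<in>A. g ** a = a ** g) \<and> g ** D = - (D ** g) \<and>
           (\<forall>x. J (g *v x) = eps'' *s (g *v J x))) \<and>
     (\<forall>a\<in>A. \<forall>b\<in>A. commutator a (Jconj J b) = 0) \<and>
     (\<forall>a\<in>A. \<forall>b\<in>A. commutator (commutator D a) (Jconj J b) = 0)"

definition AC :: "'n::finite cop set \<Rightarrow> 'n cop set" where
  "AC A = star_alg_gen A"

text \<open>Units P_i of the simple summands of A_C = the minimal (nonzero) central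
  projections of A_C.\<close>
definition central_projection :: "'n::finite cop set \<Rightarrow> 'n cop \<Rightarrow> bool" where
  "central_projection S P \<longleftrightarrow> P \<in> S \<and> P ** P = P \<and> adj P = P \<and> P \<noteq> 0 \<and>
     (\<forall>x\<in>S. P ** x = x ** P)"

definition summand_units :: "'n::finite cop set \<Rightarrow> 'n cop set" where
  "summand_units A = {P. central_projection (AC A) P \<and>
     (\<forall>Q. central_projection (AC A) Q \<and> Q ** P = Q \<longrightarrow> Q = P)}"

definition Dblock :: "('n::finite hvec \<Rightarrow> 'n hvec) \<Rightarrow> 'n cop \<Rightarrow> 'n cop \<Rightarrow> 'n cop
   \<Rightarrow> 'n cop \<Rightarrow> 'n cop \<Rightarrow> 'n cop" where
  "Dblock J D Pa Pb Pc Pd = Pa ** Jconj J Pb ** D ** Pc ** Jconj J Pd"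

definition D0 :: "'n::finite cop set \<Rightarrow> 'n cop \<Rightarrow> ('n hvec \<Rightarrow> 'n hvec) \<Rightarrow> 'n cop" where
  "D0 A D J = (\<Sum>Pa\<in>summand_units A. \<Sum>Pb\<in>summand_units A.
                 \<Sum>Pc\<in>summand_units A - {Pa}. Dblock J D Pa Pb Pc Pb)"

definition D1 :: "'n::finite cop set \<Rightarrow> 'n cop \<Rightarrow> ('n hvec \<Rightarrow> 'n hvec) \<Rightarrow> 'n cop" where
  "D1 A D J = (\<Sum>Pa\<in>summand_units A. \<Sum>Pb\<in>summand_units A.
                 \<Sum>Pd\<in>summand_units A - {Pb}. Dblock J D Pa Pb Pa Pd)"

definition DR :: "'n::finite cop set \<Rightarrow> 'n cop \<Rightarrow> ('n hvec \<Rightarrow> 'n hvec) \<Rightarrow> 'n cop" where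
  "DR A D J = (\<Sum>Pa\<in>summand_units A. \<Sum>Pb\<in>summand_units A. Dblock J D Pa Pb Pa Pb)"

definition CliffD :: "'n::finite cop set \<Rightarrow> 'n cop \<Rightarrow> 'n cop set" where
  "CliffD A D = star_alg_gen (A \<union> {a ** commutator D b | a b. a \<in> A \<and> b \<in> A})"

definition second_order_condition ::
  "'n::finite cop set \<Rightarrow> 'n cop \<Rightarrow> ('n hvec \<Rightarrow> 'n hvec) \<Rightarrow> bool" where
  "second_order_condition A D J \<longleftrightarrow>
     (\<forall>x\<in>CliffD A D. \<forall>y\<in>opp J ` CliffD A D. x ** y = y ** x)"

end

theory Submission
  imports Defs
begin


lemma mm_ldist: "(A::'n::finite cop) ** (B + C) = A ** B + A ** C"
  by (rule matrix_add_ldistrib)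
lemma mm_rdist: "((A::'n::finite cop) + B) ** C = A ** C + B ** C"
  by (simp add: matrix_eq matrix_vector_mul_assoc[symmetric] matrix_vector_mult_add_rdistrib)
lemma mm_ldiff: "(A::'n::finite cop) ** (B - C) = A ** B - A ** C"
  by (simp add: matrix_eq matrix_vector_mul_assoc[symmetric] matrix_vector_mult_diff_distrib
     matrix_vector_mult_diff_rdistrib)
lemma mm_rdiff: "((A::'n::finite cop) - B) ** C = A ** C - B ** C"
  by (simp add: matrix_eq matrix_vector_mul_assoc[symmetric] matrix_vector_mult_diff_rdistrib)
lemma mm_0l[simp]: "(0::'n::finite cop) ** A = 0"
  by (simp add: matrix_eq matrix_vector_mul_assoc[symmetric])
lemma mm_0r[simp]: "(A::'n::finite cop) ** 0 = 0"
  by (simp add: matrix_eq matrix_vector_mul_assoc[symmetric])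
lemma mm_sum_l: "(\<Sum>i\<in>S. (f i::'n::finite cop)) ** (B::'n::finite cop) = (\<Sum>i\<in>S. f i ** B)"
  by (induction S rule: infinite_finite_induct) (auto simp: mm_rdist)
lemma mm_sum_r: "(B::'n::finite cop) ** (\<Sum>i\<in>S. (f i::'n cop)) = (\<Sum>i\<in>S. B ** f i)"
  by (induction S rule: infinite_finite_induct) (auto simp: mm_ldist)

lemma cscale_mv: "cscale c M *v x = c *s (M *v x)"
  by (simp add: cscale_def matrix_vector_mult_def vec_eq_iff sum_distrib_left mult.assoc)
lemma cscale_mm_l: "cscale c (A::'n::finite cop) ** B = cscale c (A ** B)"
  by (simp add: matrix_eq matrix_vector_mul_assoc[symmetric] cscale_mv)
lemma cscale_mm_r: "(A::'n::finite cop) ** cscale c B = cscale c (A ** B)"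
  by (simp add: matrix_eq matrix_vector_mul_assoc[symmetric] cscale_mv vec.scale)
lemma cscale_1[simp]: "cscale 1 M = M"
  by (simp add: cscale_def)
lemma cscale_m1: "cscale (-1) M = - M"
  by (simp add: cscale_def vec_eq_iff)
lemma cscale_cscale: "cscale a (cscale b M) = cscale (a*b) M"
  by (simp add: cscale_def mult.assoc)
lemma cscale_add: "cscale c (A + B) = cscale c A + cscale c B"
  by (simp add: cscale_def vec_eq_iff algebra_simps)
lemma cscale_diff: "cscale c (A - B) = cscale c A - cscale c B"
  by (simp add: cscale_def vec_eq_iff algebra_simps)
lemma cscale_0[simp]: "cscale c 0 = 0"
  by (simp add: cscale_def vec_eq_iff)

lemma adj_adj[simp]: "adj (adj M) = M"
  by (simp add: adj_def vec_eq_iff)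
lemma adj_add: "adj (A + B) = adj A + adj B"
  by (simp add: adj_def vec_eq_iff)
lemma adj_diff: "adj (A - B) = adj A - adj B"
  by (simp add: adj_def vec_eq_iff)
lemma adj_0[simp]: "adj 0 = 0"
  by (simp add: adj_def vec_eq_iff)
lemma adj_mat1[simp]: "adj (mat 1) = mat 1"
  by (simp add: adj_def vec_eq_iff mat_def)
lemma adj_cscale: "adj (cscale c M) = cscale (cnj c) (adj M)"
  by (simp add: adj_def cscale_def vec_eq_iff)
lemma adj_mm: "adj ((A::'n::finite cop) ** B) = adj B ** adj A"
  by (simp add: adj_def matrix_matrix_mult_def vec_eq_iff mult.commute)
lemma adj_sum: "adj (\<Sum>i\<in>S. f i) = (\<Sum>i\<in>S. adj (f i))"
  by (induction S rule: infinite_finite_induct) (auto simp: adj_add)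

lemma comm_D_cscale: "commutator D (cscale c a) = cscale c (commutator D a)"
  by (simp add: commutator_def cscale_mm_l cscale_mm_r cscale_diff)



definition cinner :: "'n::finite hvec \<Rightarrow> 'n hvec \<Rightarrow> complex" where
  "cinner x y = (\<Sum>i\<in>UNIV. x$i * cnj (y$i))"

lemma pol1: "4*(a*cnj b) = of_real((cmod(a+b))^2) - of_real((cmod(a-b))^2)
   + \<i> * of_real((cmod(a+\<i>*b))^2) - \<i> * of_real((cmod(a-\<i>*b))^2)"
  unfolding complex_norm_square
  by (simp add: ring_distribs algebra_simps)

lemma normsq_vec: "(norm (x::'n::finite hvec))^2 = (\<Sum>i\<in>UNIV. (cmod (x$i))^2)"
  by (simp add: power2_norm_eq_inner inner_vec_def)

lemma polarization: "4 * cinner x y = of_real ((norm (x+y))^2) - of_real ((norm (x-y))^2)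
   + \<i> * of_real ((norm (x + \<i> *s y))^2) - \<i> * of_real ((norm (x - \<i> *s y))^2)"
proof -
  have "4 * cinner x y = (\<Sum>i\<in>UNIV. 4*(x$i * cnj(y$i)))" by (simp add: cinner_def sum_distrib_left)
  also have "\<dots> = (\<Sum>i\<in>UNIV. of_real((cmod((x+y)$i))^2) - of_real((cmod((x-y)$i))^2)
   + \<i> * of_real((cmod((x + \<i> *s y)$i))^2) - \<i> * of_real((cmod((x - \<i> *s y)$i))^2))"
    by (simp only: pol1 vector_add_component vector_minus_component vector_smult_component)
  also have "\<dots> = of_real ((norm (x+y))^2) - of_real ((norm (x-y))^2)
   + \<i> * of_real ((norm (x + \<i> *s y))^2) - \<i> * of_real ((norm (x - \<i> *s y))^2)"
    unfolding normsq_vec of_real_sum sum_distrib_left sum_subtractf sum.distrib ..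
  finally show ?thesis .
qed

lemma cinner_axis: "cinner (axis i 1) y = cnj (y$i)"
proof -
  have eq: "(\<lambda>ia. axis i 1 $ ia * cnj (y $ ia)) = (\<lambda>ia. if ia = i then cnj (y$i) else 0)"
    by (auto simp: axis_def)
  show ?thesis unfolding cinner_def eq by simp
qed

lemma cinner_ext: "(\<And>x. cinner x y = cinner x z) \<Longrightarrow> y = z"
  by (metis cinner_axis complex_cnj_cnj vec_eq_iff)

lemma cinner_adj: "cinner (M *v x) y = cinner x (adj M *v y)"
proof -
  have "cinner (M *v x) y = (\<Sum>i\<in>UNIV. \<Sum>j\<in>UNIV. M$i$j * x$j * cnj (y$i))"
    unfolding cinner_def matrix_vector_mult_def by (simp add: sum_distrib_right)
  also have "\<dots> = (\<Sum>j\<in>UNIV. \<Sum>i\<in>UNIV. M$i$j * x$j * cnj (y$i))"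
    by (rule sum.swap)
  also have "\<dots> = cinner x (adj M *v y)"
    unfolding cinner_def adj_def matrix_vector_mult_def
    by (simp add: sum_distrib_left cnj_sum mult_ac)
  finally show ?thesis .
qed

context
  fixes J :: "'n::finite hvec \<Rightarrow> 'n hvec"
  assumes aJ: "antilinear_isometry J"
begin

lemma J_add: "J (x + y) = J x + J y" using aJ by (simp add: antilinear_isometry_def)
lemma J_scale: "J (c *s x) = cnj c *s J x" using aJ by (simp add: antilinear_isometry_def)
lemma J_norm: "norm (J x) = norm x" using aJ by (simp add: antilinear_isometry_def)
lemma J_bij: "bij J" using aJ by (simp add: antilinear_isometry_def)
lemma J_inv1[simp]: "J (inv J x) = x" using J_bij by (simp add: bij_is_surj surj_f_inv_f)
lemma J_inv2[simp]: "inv J (J x) = x" using J_bij by (simp add: bij_is_inj inv_f_f)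
lemma J_diff: "J (x - y) = J x - J y"
  by (metis J_add add_diff_cancel diff_add_cancel)
lemma Jinv_add: "inv J (x + y) = inv J x + inv J y"
  by (metis J_add J_inv1 J_inv2)
lemma Jinv_scale: "inv J (c *s x) = cnj c *s inv J x"
  by (metis J_scale J_inv1 J_inv2 complex_cnj_cnj)

lemma Jc_lin: "Vector_Spaces.linear (*s) (*s) (\<lambda>x. J (X *v inv J x))"
proof -
  have vs: "vector_space ((*s)::complex \<Rightarrow> 'n hvec \<Rightarrow> 'n hvec)"
    using matrix_vector_mul_linear_gen[of X] unfolding Vector_Spaces.linear_iff by blast
  show ?thesis unfolding Vector_Spaces.linear_iff
    by (auto simp: vs Jinv_add Jinv_scale J_add J_scale vec.add vec.scale)
qed

lemma Jc_mv: "Jconj J X *v x = J (X *v inv J x)"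
  unfolding Jconj_def by (rule matrix_works[OF Jc_lin])

lemma J_cinner: "cinner (J x) (J y) = cnj (cinner x y)"
proof -
  have i: "\<i> *s J y = J ((- \<i>) *s y)" by (subst J_scale) simp
  have "4 * cinner (J x) (J y) = cnj (4 * cinner x y)"
    unfolding polarization i
    by (simp add: J_add[symmetric] J_diff[symmetric] J_norm algebra_simps)
  then show ?thesis by simp
qed

lemma Jc_mm: "Jconj J (X ** Y) = Jconj J X ** Jconj J Y"
  by (simp add: matrix_eq Jc_mv matrix_vector_mul_assoc[symmetric])
lemma Jc_add: "Jconj J (X + Y) = Jconj J X + Jconj J Y"
  by (simp add: matrix_eq Jc_mv matrix_vector_mult_add_rdistrib J_add)
lemma Jc_diff: "Jconj J (X - Y) = Jconj J X - Jconj J Y"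
  by (simp add: matrix_eq Jc_mv matrix_vector_mult_diff_rdistrib J_diff)
lemma Jc_0[simp]: "Jconj J 0 = 0"
  by (metis Jc_diff diff_self)
lemma Jc_1[simp]: "Jconj J (mat 1) = mat 1"
  by (simp add: matrix_eq Jc_mv)
lemma Jc_cscale: "Jconj J (cscale c X) = cscale (cnj c) (Jconj J X)"
  by (simp add: matrix_eq Jc_mv cscale_mv J_scale)
lemma Jc_sum: "Jconj J (\<Sum>i\<in>S. f i) = (\<Sum>i\<in>S. Jconj J (f i))"
  by (induction S rule: infinite_finite_induct) (auto simp: Jc_add)
lemma Jc_adj: "adj (Jconj J X) = Jconj J (adj X)"
proof -
  have "adj (Jconj J X) *v y = Jconj J (adj X) *v y" for y
  proof (rule cinner_ext)
    fix x
    have "cinner x (adj (Jconj J X) *v y) = cinner (J (X *v inv J x)) (J (inv J y))"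
      by (simp add: cinner_adj[symmetric] Jc_mv)
    also have "\<dots> = cnj (cinner (inv J x) (adj X *v inv J y))"
      using J_cinner[of "X *v inv J x" "inv J y"] by (simp add: cinner_adj)
    also have "\<dots> = cinner (J (inv J x)) (J (adj X *v inv J y))"
      using J_cinner[of "inv J x" "adj X *v inv J y"] by simp
    also have "\<dots> = cinner x (Jconj J (adj X) *v y)"
      by (simp add: Jc_mv)
    finally show "cinner x (adj (Jconj J X) *v y) = cinner x (Jconj J (adj X) *v y)" .
  qed
  then show ?thesis by (simp add: matrix_eq)
qed

end


lemma comm_closure:
  assumes T: "\<forall>y\<in>T. adj y \<in> T" and G: "\<forall>s\<in>S. \<forall>y\<in>T. s ** y = y ** s"
    and x: "x \<in> star_alg_gen S"
  shows "\<forall>y\<in>T. x ** y = y ** x"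
  using x
proof (induction rule: star_alg_gen.induct)
  case (gen a) then show ?case using G by blast
next
  case zero then show ?case by simp
next
  case (add a b) then show ?case by (simp add: mm_ldist mm_rdist)
next
  case (scale a c) then show ?case by (simp add: cscale_mm_l cscale_mm_r)
next
  case (mult a b) then show ?case by (metis matrix_mul_assoc)
next
  case (adj a)
  show ?case
  proof
    fix y assume y: "y \<in> T"
    then have "a ** adj y = adj y ** a" using adj T by blast
    then have "adj (adj y ** a) = adj (a ** adj y)" by simp
    then show "adj a ** y = y ** adj a" by (simp add: adj_mm)
  qed
qed

lemma comm_closure2:
  assumes "\<forall>y\<in>T. adj y \<in> T" "\<forall>s\<in>S. \<forall>y\<in>T. s ** y = y ** s"
    "x \<in> star_alg_gen S" "y \<in> T"
  shows "x ** y = y ** x"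
  using comm_closure[OF assms(1-3)] assms(4) by blast

lemma sag_mono: assumes "S \<subseteq> S'" shows "x \<in> star_alg_gen S \<Longrightarrow> x \<in> star_alg_gen S'"
  by (induction rule: star_alg_gen.induct) (use assms in \<open>auto intro: star_alg_gen.intros\<close>)

lemma sag_diff: "a \<in> star_alg_gen S \<Longrightarrow> b \<in> star_alg_gen S \<Longrightarrow> a - b \<in> star_alg_gen S"
  by (metis star_alg_gen.add star_alg_gen.scale cscale_m1 diff_conv_add_uminus)

lemma sag_sum: "(\<And>i. i \<in> I \<Longrightarrow> f i \<in> star_alg_gen S) \<Longrightarrow> (\<Sum>i\<in>I. f i) \<in> star_alg_gen S"
  by (induction I rule: infinite_finite_induct) (auto intro: star_alg_gen.intros)

lemma Jc_sag:
  assumes aJ: "antilinear_isometry J"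
  shows "x \<in> star_alg_gen S \<Longrightarrow> Jconj J x \<in> star_alg_gen (Jconj J ` S)"
  by (induction rule: star_alg_gen.induct)
     (auto intro: star_alg_gen.intros simp: Jc_add[OF aJ] Jc_mm[OF aJ] Jc_cscale[OF aJ]
        Jc_adj[OF aJ, symmetric] Jc_0[OF aJ])

lemma opp_sag:
  assumes aJ: "antilinear_isometry J"
  shows "x \<in> star_alg_gen S \<Longrightarrow> opp J x \<in> star_alg_gen (opp J ` S)"
proof (induction rule: star_alg_gen.induct)
  case (gen a) then show ?case by (auto intro: star_alg_gen.intros)
next
  case zero then show ?case by (simp add: opp_def Jc_0[OF aJ] star_alg_gen.zero)
next
  case (add a b) then show ?case
    by (simp add: opp_def adj_add Jc_add[OF aJ] star_alg_gen.add)
next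
  case (scale a c)
  have "opp J (cscale c a) = cscale c (opp J a)"
    by (simp add: opp_def adj_cscale Jc_cscale[OF aJ])
  then show ?case using scale by (simp add: star_alg_gen.scale)
next
  case (mult a b)
  have "opp J (a ** b) = opp J b ** opp J a"
    by (simp add: opp_def adj_mm Jc_mm[OF aJ])
  then show ?case using mult by (simp add: star_alg_gen.mult)
next
  case (adj a)
  have "opp J (adj a) = adj (opp J a)"
    by (simp add: opp_def Jc_adj[OF aJ])
  then show ?case using adj by (simp add: star_alg_gen.adj)
qed



lemma comm0: "commutator a b = 0 \<longleftrightarrow> a ** b = b ** a"
  by (simp add: commutator_def)

lemma commutator_add: "commutator D (a + b) = commutator D a + commutator D b"
  by (simp add: commutator_def mm_ldist mm_rdist)

lemma commutator_mm: "commutator D (a ** b) = commutator D a ** b + a ** commutator D b"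
  by (simp add: commutator_def mm_ldiff mm_rdiff matrix_mul_assoc)

lemma commutator_adj: "adj D = D \<Longrightarrow> commutator D (adj a) = cscale (-1) (adj (commutator D a))"
  by (simp add: commutator_def adj_diff adj_mm cscale_m1)

lemma commutator_cscale_l: "commutator (cscale c X) Y = cscale c (commutator X Y)"
  by (simp add: commutator_def cscale_mm_l cscale_mm_r cscale_diff)

lemma cscale_cancel: "c \<noteq> 0 \<Longrightarrow> cscale c X = cscale c Y \<Longrightarrow> X = Y"
  by (metis cscale_1 cscale_cscale field_class.field_inverse mult.commute)

locale rst =
  fixes A :: "'n::finite cop set" and D :: "'n cop" and J :: "'n hvec \<Rightarrow> 'n hvec"
    and eps eps' :: complex and grading :: "('n cop \<times> complex) option"
  assumes rst: "real_spectral_triple A D J eps eps' grading"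
begin

abbreviation "Jc \<equiv> Jconj J"

lemma RSA: "real_star_subalgebra A" using rst by (simp add: real_spectral_triple_def)
lemma Dsa: "adj D = D" using rst by (simp add: real_spectral_triple_def)
lemma aJ: "antilinear_isometry J" using rst by (simp add: real_spectral_triple_def)
lemma eps: "eps = 1 \<or> eps = -1" using rst by (simp add: real_spectral_triple_def)
lemma eps': "eps' = 1 \<or> eps' = -1" using rst by (simp add: real_spectral_triple_def)
lemma JJ: "J (J x) = eps *s x" using rst by (simp add: real_spectral_triple_def)
lemma JD: "J (D *v x) = eps' *s (D *v J x)" using rst by (simp add: real_spectral_triple_def)
lemma zeroA: "a \<in> A \<Longrightarrow> b \<in> A \<Longrightarrow> a ** Jc b = Jc b ** a"
  using rst by (simp add: real_spectral_triple_def comm0)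
lemma firstA: "a \<in> A \<Longrightarrow> b \<in> A \<Longrightarrow> commutator D a ** Jc b = Jc b ** commutator D a"
  using rst by (simp add: real_spectral_triple_def comm0)

lemma eps'_nz: "eps' \<noteq> 0" using eps' by auto

lemma A_1: "mat 1 \<in> A" using RSA by (simp add: real_star_subalgebra_def)
lemma A_adj: "a \<in> A \<Longrightarrow> adj a \<in> A" using RSA by (simp add: real_star_subalgebra_def)
lemma A_mm: "a \<in> A \<Longrightarrow> b \<in> A \<Longrightarrow> a ** b \<in> A" using RSA by (simp add: real_star_subalgebra_def)
lemma A_neg: "a \<in> A \<Longrightarrow> cscale (-1) a \<in> A"
  using RSA unfolding real_star_subalgebra_def cscale_m1
  by (metis scaleR_minus1_left)

lemmas Jc_mm' = Jc_mm[OF aJ] and Jc_add' = Jc_add[OF aJ] and Jc_diff' = Jc_diff[OF aJ]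
  and Jc_cscale' = Jc_cscale[OF aJ] and Jc_adj' = Jc_adj[OF aJ] and Jc_sum' = Jc_sum[OF aJ]
  and Jc_mv' = Jc_mv[OF aJ] and Jc_0' = Jc_0[OF aJ] and Jc_1' = Jc_1[OF aJ]

lemma Jinv1[simp]: "J (inv J x) = x" by (rule J_inv1[OF aJ])
lemma Jinv2[simp]: "inv J (J x) = x" by (rule J_inv2[OF aJ])

lemma A_AC: "a \<in> A \<Longrightarrow> a \<in> AC A" by (simp add: AC_def star_alg_gen.gen)
lemma AC_adj: "a \<in> AC A \<Longrightarrow> adj a \<in> AC A" by (simp add: AC_def star_alg_gen.adj)
lemma AC_mm: "a \<in> AC A \<Longrightarrow> b \<in> AC A \<Longrightarrow> a ** b \<in> AC A" by (simp add: AC_def star_alg_gen.mult)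

lemma zero_AC1: "x \<in> AC A \<Longrightarrow> b \<in> A \<Longrightarrow> x ** Jc b = Jc b ** x"
  using comm_closure2[of "Jc ` A" A x "Jc b"] zeroA A_adj
  by (auto simp: AC_def Jc_adj')

lemma zero_AC: "a \<in> AC A \<Longrightarrow> b \<in> AC A \<Longrightarrow> a ** Jc b = Jc b ** a"
proof -
  assume a: "a \<in> AC A" and b: "b \<in> AC A"
  have "Jc b \<in> star_alg_gen (Jc ` A)" using b Jc_sag[OF aJ] by (simp add: AC_def)
  then show ?thesis
    using comm_closure2[of "AC A" "Jc ` A" "Jc b" a] zero_AC1 a AC_adj by auto
qed

lemma first_AC1: "x \<in> AC A \<Longrightarrow> \<forall>b\<in>A. commutator D x ** Jc b = Jc b ** commutator D x"
  unfolding AC_def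
proof (induction rule: star_alg_gen.induct)
  case (gen a) then show ?case using firstA by blast
next
  case zero then show ?case by (simp add: commutator_def)
next
  case (add a b) then show ?case by (simp add: commutator_add mm_ldist mm_rdist)
next
  case (scale a c) then show ?case by (simp add: comm_D_cscale cscale_mm_l cscale_mm_r)
next
  case (mult a b)
  show ?case
  proof
    fix c assume c: "c \<in> A"
    have ac: "a ** Jc c = Jc c ** a" "b ** Jc c = Jc c ** b"
      using mult zero_AC1 c by (auto simp: AC_def)
    have "commutator D (a ** b) ** Jc c
        = commutator D a ** (b ** Jc c) + a ** (commutator D b ** Jc c)"
      by (simp add: commutator_mm mm_rdist matrix_mul_assoc)
    also have "\<dots> = Jc c ** commutator D (a ** b)"
      using mult c ac by (simp add: commutator_mm mm_ldist matrix_mul_assoc)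
    finally show "commutator D (a ** b) ** Jc c = Jc c ** commutator D (a ** b)" .
  qed
next
  case (adj a)
  show ?case
  proof
    fix c assume c: "c \<in> A"
    then have "commutator D a ** Jc (adj c) = Jc (adj c) ** commutator D a"
      using adj A_adj by blast
    then have "adj (commutator D a ** Jc (adj c)) = adj (Jc (adj c) ** commutator D a)" by simp
    then have "Jc c ** adj (commutator D a) = adj (commutator D a) ** Jc c"
      by (simp add: adj_mm Jc_adj')
    then show "commutator D (adj a) ** Jc c = Jc c ** commutator D (adj a)"
      by (simp add: commutator_adj[OF Dsa] cscale_mm_l cscale_mm_r)
  qed
qed

lemma first_AC: "a \<in> AC A \<Longrightarrow> b \<in> AC A \<Longrightarrow> commutator D a ** Jc b = Jc b ** commutator D a"
proof -
  assume a: "a \<in> AC A" and b: "b \<in> AC A"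
  let ?T = "{commutator D x | x. x \<in> AC A}"
  have T: "\<forall>y\<in>?T. adj y \<in> ?T"
  proof
    fix y assume "y \<in> ?T"
    then obtain x where x: "x \<in> AC A" "y = commutator D x" by blast
    have "adj y = commutator D (cscale (-1) (adj x))"
      using x by (simp add: commutator_adj[OF Dsa] comm_D_cscale cscale_cscale adj_cscale)
    moreover have "cscale (-1) (adj x) \<in> AC A" using x
      by (simp add: AC_def star_alg_gen.adj star_alg_gen.scale)
    ultimately show "adj y \<in> ?T" by blast
  qed
  have "Jc b \<in> star_alg_gen (Jc ` A)" using b Jc_sag[OF aJ] by (simp add: AC_def)
  moreover have "\<forall>s\<in>Jc ` A. \<forall>y\<in>?T. s ** y = y ** s" using first_AC1 by fastforce
  ultimately have "Jc b ** commutator D a = commutator D a ** Jc b"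
    using comm_closure2[OF T, of "Jc ` A" "Jc b" "commutator D a"] a by blast
  then show ?thesis by simp
qed

lemma L4: "a \<in> AC A \<Longrightarrow> b \<in> AC A \<Longrightarrow> a ** commutator D (Jc b) = commutator D (Jc b) ** a"
proof -
  assume a: "a \<in> AC A" and b: "b \<in> AC A"
  define e where "e = Jc b"
  have f: "(D ** a - a ** D) ** e = e ** (D ** a - a ** D)"
    using first_AC[OF a b] by (simp add: e_def commutator_def)
  have z: "a ** e = e ** a" using zero_AC[OF a b] by (simp add: e_def)
  have f2: "D ** a ** e - a ** D ** e = e ** D ** a - e ** a ** D"
    using f by (simp add: mm_ldiff mm_rdiff matrix_mul_assoc)
  have "a ** (D ** e - e ** D) = a ** D ** e - a ** e ** D"
    by (simp add: mm_ldiff matrix_mul_assoc)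
  also have "\<dots> = D ** a ** e - e ** D ** a + e ** a ** D - a ** e ** D"
    using f2 by (simp add: algebra_simps)
  also have "\<dots> = D ** e ** a - e ** D ** a"
    using z by (simp add: matrix_mul_assoc[symmetric])
  also have "\<dots> = (D ** e - e ** D) ** a" by (simp add: mm_rdiff)
  finally show ?thesis by (simp add: commutator_def e_def)
qed

lemma inv_J: "inv J x = eps *s J x"
proof -
  have "J (eps *s J x) = x" using eps by (auto simp: J_scale[OF aJ] JJ)
  then show ?thesis by (metis J_inv2[OF aJ])
qed

lemma JJc: "Jc (Jc X) = X"
proof -
  have "Jc (Jc X) *v x = X *v x" for x
  proof -
    have "inv J (inv J x) = eps *s x"
      using eps by (auto simp: inv_J J_scale[OF aJ] JJ)
    have "Jc (Jc X) *v x = J (J (X *v inv J (inv J x)))" by (simp add: Jc_mv')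
    also have "\<dots> = eps *s (eps *s (X *v x))" using \<open>inv J (inv J x) = eps *s x\<close>
      by (simp add: JJ vec.scale)
    also have "\<dots> = X *v x" using eps by (auto simp: vector_smult_assoc)
    finally show ?thesis .
  qed
  then show ?thesis by (simp add: matrix_eq)
qed

lemma JcD: "Jc D = cscale eps' D"
  by (simp add: matrix_eq Jc_mv' JD cscale_mv)

lemma Jc_comm: "Jc (commutator X Y) = commutator (Jc X) (Jc Y)"
  by (simp add: commutator_def Jc_diff' Jc_mm')

end


lemma scaleR_cscale: "r *\<^sub>R (M::'n::finite cop) = cscale (complex_of_real r) M"
  unfolding vec_eq_iff cscale_def by (simp add: complex_eq_iff)

lemma range_subspace: "vec.subspace (range (\<lambda>x. (M::'n::finite cop) *v x))"
  unfolding vec.subspace_def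
proof (intro conjI ballI allI)
  show "0 \<in> range ((*v) M)" by (metis matrix_vector_mult_0_right rangeI)
next
  fix x y assume "x \<in> range ((*v) M)" "y \<in> range ((*v) M)"
  then obtain a b where "x = M *v a" "y = M *v b" by blast
  then have "x + y = M *v (a + b)" by (simp add: matrix_vector_right_distrib)
  then show "x + y \<in> range ((*v) M)" by blast
next
  fix c x assume "x \<in> range ((*v) M)"
  then show "c *s x \<in> range ((*v) M)" by (metis vec.scale rangeE rangeI)
qed

context rst begin

abbreviation "U \<equiv> summand_units A"

lemma U_cp: "P \<in> U \<Longrightarrow> central_projection (AC A) P"
  by (simp add: summand_units_def)
lemma U_min: "P \<in> U \<Longrightarrow> central_projection (AC A) Q \<Longrightarrow> Q ** P = Q \<Longrightarrow> Q = P"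
  by (simp add: summand_units_def)
lemma U_AC: "P \<in> U \<Longrightarrow> P \<in> AC A" using U_cp central_projection_def by blast
lemma U_idem: "P \<in> U \<Longrightarrow> P ** P = P" using U_cp central_projection_def by blast
lemma U_sa: "P \<in> U \<Longrightarrow> adj P = P" using U_cp central_projection_def by blast
lemma U_nz: "P \<in> U \<Longrightarrow> P \<noteq> 0" using U_cp central_projection_def by blast
lemma U_central: "P \<in> U \<Longrightarrow> x \<in> AC A \<Longrightarrow> P ** x = x ** P"
  using U_cp central_projection_def by blast

lemma U_orth: assumes P: "P \<in> U" and P': "P' \<in> U" and ne: "P \<noteq> P'" shows "P ** P' = 0"
proof (rule ccontr)
  assume nz: "P ** P' \<noteq> 0"
  define R where "R = P ** P'"
  have c: "P' ** P = P ** P'" using U_central[OF P' U_AC[OF P]] by simp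
  have cp: "central_projection (AC A) R"
    unfolding central_projection_def
  proof (intro conjI ballI)
    show "R \<in> AC A" using R_def AC_mm U_AC P P' by simp
    show "R ** R = R" unfolding R_def
      by (metis P P' U_idem c matrix_mul_assoc)
    show "adj R = R" unfolding R_def by (simp add: adj_mm U_sa P P' c)
    show "R \<noteq> 0" using nz R_def by simp
    fix x assume x: "x \<in> AC A"
    show "R ** x = x ** R" unfolding R_def
      by (metis P P' U_central x matrix_mul_assoc)
  qed
  have "R ** P = R" unfolding R_def by (metis P U_idem c matrix_mul_assoc)
  then have "R = P" using U_min[OF P cp] by simp
  moreover have "R ** P' = R" unfolding R_def by (metis P' U_idem matrix_mul_assoc)
  then have "R = P'" using U_min[OF P' cp] by simp
  ultimately show False using ne by simp
qed

lemma U_fin: "finite U"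
proof -
  have "\<not> dependent U"
  proof
    assume "dependent U"
    then obtain t u v where t: "finite t" "t \<subseteq> U" "(\<Sum>w\<in>t. u w *\<^sub>R w) = 0" "v \<in> t" "u v \<noteq> 0"
      unfolding real_vector.dependent_explicit by blast
    have "v ** (\<Sum>w\<in>t. u w *\<^sub>R w) = (\<Sum>w\<in>t. u w *\<^sub>R (v ** w))"
      by (simp add: mm_sum_r scaleR_cscale cscale_mm_r)
    also have "\<dots> = (\<Sum>w\<in>t. if w = v then u v *\<^sub>R v else 0)"
    proof (intro sum.cong refl)
      fix w assume w: "w \<in> t"
      then have "w \<in> U" "v \<in> U" using t by auto
      then show "u w *\<^sub>R (v ** w) = (if w = v then u v *\<^sub>R v else 0)"
        using U_orth[of v w] U_idem[of v] by auto
    qed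
    also have "\<dots> = u v *\<^sub>R v" using t by simp
    finally have "u v *\<^sub>R v = 0" using t by simp
    then show False using t U_nz by auto
  qed
  then show ?thesis using independent_bound by blast
qed

lemma sum_U_mul: "P \<in> U \<Longrightarrow> P ** (\<Sum>P'\<in>U. P') = P"
proof -
  assume P: "P \<in> U"
  have "P ** (\<Sum>P'\<in>U. P') = (\<Sum>P'\<in>U. if P' = P then P else 0)"
    unfolding mm_sum_r using P by (intro sum.cong) (auto simp: U_orth U_idem)
  also have "\<dots> = P" using P U_fin by simp
  finally show ?thesis .
qed

lemma min_exists:
  assumes R: "central_projection (AC A) R"
  shows "\<exists>Q\<in>U. Q ** R = Q"
proof -
  define K where "K = {Q. central_projection (AC A) Q \<and> Q ** R = Q}"
  define f where "f Q = vec.dim (range (\<lambda>x. (Q::'n cop) *v x))" for Q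
  have "R \<in> K" using R unfolding K_def central_projection_def by simp
  then obtain Q0 where Q0: "Q0 \<in> K" and mn: "\<And>Q. Q \<in> K \<Longrightarrow> f Q0 \<le> f Q"
    using ex_has_least_nat[of "\<lambda>Q. Q \<in> K" R f] by blast
  have cp0: "central_projection (AC A) Q0" using Q0 K_def by simp
  have "Q0 \<in> U"
    unfolding summand_units_def
  proof (intro CollectI conjI allI impI cp0)
    fix Q assume "central_projection (AC A) Q \<and> Q ** Q0 = Q"
    then have cp: "central_projection (AC A) Q" and QQ0: "Q ** Q0 = Q" by auto
    have "Q ** R = Q" using QQ0 Q0 unfolding K_def by (metis (mono_tags) mem_Collect_eq matrix_mul_assoc)
    then have "Q \<in> K" using cp K_def by simp
    then have le: "f Q0 \<le> f Q" by (rule mn)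
    have Q0Q: "Q0 ** Q = Q" using cp0 cp QQ0 unfolding central_projection_def by metis
    have sub: "range ((*v) Q) \<subseteq> range ((*v) Q0)"
    proof
      fix y assume "y \<in> range ((*v) Q)"
      then obtain x where "y = Q *v x" by blast
      then have "y = Q0 *v (Q *v x)" by (simp add: matrix_vector_mul_assoc Q0Q)
      then show "y \<in> range ((*v) Q0)" by blast
    qed
    have "vec.span (range ((*v) Q)) = vec.span (range ((*v) Q0))"
      using vec.dim_eq_span[OF sub] le f_def by simp
    then have eqr: "range ((*v) Q) = range ((*v) Q0)"
      using range_subspace[of Q] range_subspace[of Q0] by (metis vec.span_eq_iff)
    have "Q ** Q0 = Q0"
    proof (subst matrix_eq, intro allI)
      fix x
      have "Q0 *v x \<in> range ((*v) Q)" using eqr by blast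
      then obtain z where z: "Q0 *v x = Q *v z" by blast
      have "Q ** Q = Q" using cp central_projection_def by blast
      then show "(Q ** Q0) *v x = Q0 *v x"
        by (metis matrix_vector_mul_assoc z)
    qed
    then show "Q = Q0" using QQ0 by simp
  qed
  then show ?thesis using Q0 K_def by blast
qed

lemma U_sum: "(\<Sum>P\<in>U. P) = mat 1"
proof (rule ccontr)
  assume ne: "(\<Sum>P\<in>U. P) \<noteq> mat 1"
  define S where "S = (\<Sum>P\<in>U. P)"
  define R where "R = mat 1 - S"
  have SAC: "S \<in> AC A" unfolding S_def AC_def by (rule sag_sum) (simp add: U_AC[unfolded AC_def])
  have SS: "S ** S = S" unfolding S_def by (subst mm_sum_l) (simp add: sum_U_mul)
  have Sadj: "adj S = S" unfolding S_def by (simp add: adj_sum U_sa)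
  have Sc: "S ** x = x ** S" if "x \<in> AC A" for x
    unfolding S_def mm_sum_l mm_sum_r using U_central that by (intro sum.cong) auto
  have cp: "central_projection (AC A) R"
    unfolding central_projection_def
  proof (intro conjI ballI)
    show "R \<in> AC A" unfolding R_def AC_def
      using sag_diff[OF _ SAC[unfolded AC_def]] A_1 star_alg_gen.gen by blast
    show "R ** R = R" unfolding R_def by (simp add: mm_ldiff mm_rdiff SS)
    show "adj R = R" unfolding R_def by (simp add: adj_diff Sadj)
    show "R \<noteq> 0" using ne R_def S_def by simp
    fix x assume "x \<in> AC A"
    then show "R ** x = x ** R" unfolding R_def by (simp add: mm_ldiff mm_rdiff Sc)
  qed
  obtain Q where Q: "Q \<in> U" "Q ** R = Q" using min_exists[OF cp] by blast
  have "Q ** R = 0" unfolding R_def S_def using Q by (simp add: mm_ldiff sum_U_mul)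
  then show False using Q U_nz by simp
qed

end


lemma cscale_sum: "cscale c (\<Sum>i\<in>S. f i) = (\<Sum>i\<in>S. cscale c (f i))"
  by (induction S rule: infinite_finite_induct) (auto simp: cscale_add)

lemma sandwich: "(\<Sum>a\<in>S. (f a::'n::finite cop)) ** (M::'n::finite cop) ** (\<Sum>c\<in>T. (g c::'n cop)) = (\<Sum>a\<in>S. \<Sum>c\<in>T. f a ** M ** g c)"
proof -
  have "(\<Sum>a\<in>S. f a) ** M ** (\<Sum>c\<in>T. g c) = (\<Sum>a\<in>S. f a ** M) ** (\<Sum>c\<in>T. g c)"
    by (subst mm_sum_l[of f S M]) (rule refl)
  also have "\<dots> = (\<Sum>a\<in>S. f a ** M ** (\<Sum>c\<in>T. g c))"
    by (rule mm_sum_l)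
  also have "\<dots> = (\<Sum>a\<in>S. \<Sum>c\<in>T. f a ** M ** g c)"
    by (simp only: mm_sum_r)
  finally show ?thesis .
qed

lemma sum_split_diag:
  assumes "finite U"
  shows "(\<Sum>x\<in>U. \<Sum>y\<in>U. (f x y::'a::comm_monoid_add)) = (\<Sum>x\<in>U. \<Sum>y\<in>U-{x}. f x y) + (\<Sum>x\<in>U. f x x)"
proof -
  have "(\<Sum>x\<in>U. \<Sum>y\<in>U. f x y) = (\<Sum>x\<in>U. f x x + (\<Sum>y\<in>U-{x}. f x y))"
    using assms by (intro sum.cong refl) (simp add: sum.remove)
  then show ?thesis by (simp add: sum.distrib add.commute)
qed

context rst begin

lemma Jc0s[simp]: "Jc 0 = 0" by (rule Jc_0')
lemma Jc1s[simp]: "Jc (mat 1) = mat 1" by (rule Jc_1')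

lemma Q_idem: "P \<in> U \<Longrightarrow> Jc P ** Jc P = Jc P" by (simp add: Jc_mm'[symmetric] U_idem)
lemma Q_orth: "P \<in> U \<Longrightarrow> P' \<in> U \<Longrightarrow> P \<noteq> P' \<Longrightarrow> Jc P ** Jc P' = 0"
  by (simp add: Jc_mm'[symmetric] U_orth)
lemma Q_sum: "(\<Sum>P\<in>U. Jc P) = mat 1" by (simp add: Jc_sum'[symmetric] U_sum)
lemma PQ: "P \<in> U \<Longrightarrow> P' \<in> U \<Longrightarrow> P ** Jc P' = Jc P' ** P"
  by (simp add: zero_AC U_AC)

lemma X_eq: "P \<in> U \<Longrightarrow> P' \<in> U \<Longrightarrow> P \<noteq> P' \<Longrightarrow> P ** D ** P' = P ** commutator D P'"
  by (simp add: commutator_def mm_ldiff matrix_mul_assoc U_orth)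

lemma Y_eq: "P \<in> U \<Longrightarrow> P' \<in> U \<Longrightarrow> P \<noteq> P' \<Longrightarrow> Jc P ** D ** Jc P' = Jc P ** commutator D (Jc P')"
  by (simp add: commutator_def mm_ldiff matrix_mul_assoc Q_orth)

lemma X_comm: assumes "P \<in> U" "P' \<in> U" "P \<noteq> P'" "b \<in> AC A"
  shows "(P ** D ** P') ** Jc b = Jc b ** (P ** D ** P')"
proof -
  have 1: "P ** Jc b = Jc b ** P" using assms zero_AC U_AC by blast
  have 2: "commutator D P' ** Jc b = Jc b ** commutator D P'" using assms first_AC U_AC by blast
  show ?thesis unfolding X_eq[OF assms(1-3)]
    by (metis 1 2 matrix_mul_assoc)
qed

lemma Y_comm: assumes "P \<in> U" "P' \<in> U" "P \<noteq> P'" "a \<in> AC A"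
  shows "a ** (Jc P ** D ** Jc P') = (Jc P ** D ** Jc P') ** a"
proof -
  have 1: "a ** Jc P = Jc P ** a" using assms zero_AC U_AC by blast
  have 2: "a ** commutator D (Jc P') = commutator D (Jc P') ** a" using assms L4 U_AC by blast
  show ?thesis unfolding Y_eq[OF assms(1-3)]
    by (metis 1 2 matrix_mul_assoc)
qed

lemma D0_eq: "D0 A D J = (\<Sum>a\<in>U. \<Sum>c\<in>U-{a}. a ** D ** c)"
proof -
  have t: "Dblock J D a b c b = Jc b ** (a ** D ** c)" if "a \<in> U" "b \<in> U" "c \<in> U-{a}" for a b c
  proof -
    have "Dblock J D a b c b = (a ** Jc b) ** (D ** c ** Jc b)"
      by (simp add: Dblock_def matrix_mul_assoc)
    also have "\<dots> = (Jc b ** a) ** (D ** c ** Jc b)" using PQ that by simp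
    also have "\<dots> = Jc b ** ((a ** D ** c) ** Jc b)" by (simp add: matrix_mul_assoc)
    also have "\<dots> = Jc b ** (Jc b ** (a ** D ** c))" using X_comm[of a c b] that U_AC by auto
    also have "\<dots> = Jc b ** (a ** D ** c)" using that by (simp add: matrix_mul_assoc Q_idem)
    finally show ?thesis .
  qed
  have "D0 A D J = (\<Sum>a\<in>U. \<Sum>b\<in>U. \<Sum>c\<in>U-{a}. Jc b ** (a ** D ** c))"
    unfolding D0_def using t by (intro sum.cong refl) auto
  also have "\<dots> = (\<Sum>a\<in>U. \<Sum>c\<in>U-{a}. \<Sum>b\<in>U. Jc b ** (a ** D ** c))"
    by (intro sum.cong refl sum.swap)
  also have "\<dots> = (\<Sum>a\<in>U. \<Sum>c\<in>U-{a}. a ** D ** c)"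
    by (simp add: mm_sum_l[symmetric] Q_sum)
  finally show ?thesis .
qed

lemma D1_eq: "D1 A D J = (\<Sum>b\<in>U. \<Sum>d\<in>U-{b}. Jc b ** D ** Jc d)"
proof -
  have t: "Dblock J D a b a d = a ** (Jc b ** D ** Jc d)" if "a \<in> U" "b \<in> U" "d \<in> U-{b}" for a b d
  proof -
    have "Dblock J D a b a d = (a ** Jc b ** D) ** (a ** Jc d)"
      by (simp add: Dblock_def matrix_mul_assoc)
    also have "\<dots> = (a ** Jc b ** D) ** (Jc d ** a)" using PQ that by simp
    also have "\<dots> = a ** ((Jc b ** D ** Jc d) ** a)" by (simp add: matrix_mul_assoc)
    also have "\<dots> = a ** (a ** (Jc b ** D ** Jc d))" using Y_comm[of b d a] that U_AC by auto
    also have "\<dots> = a ** (Jc b ** D ** Jc d)" using that by (simp add: matrix_mul_assoc U_idem)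
    finally show ?thesis .
  qed
  have "D1 A D J = (\<Sum>a\<in>U. \<Sum>b\<in>U. \<Sum>d\<in>U-{b}. a ** (Jc b ** D ** Jc d))"
    unfolding D1_def using t by (intro sum.cong refl) auto
  also have "\<dots> = (\<Sum>b\<in>U. \<Sum>a\<in>U. \<Sum>d\<in>U-{b}. a ** (Jc b ** D ** Jc d))"
    by (rule sum.swap)
  also have "\<dots> = (\<Sum>b\<in>U. \<Sum>d\<in>U-{b}. \<Sum>a\<in>U. a ** (Jc b ** D ** Jc d))"
    by (intro sum.cong refl sum.swap)
  also have "\<dots> = (\<Sum>b\<in>U. \<Sum>d\<in>U-{b}. Jc b ** D ** Jc d)"
    by (simp add: mm_sum_l[symmetric] U_sum)
  finally show ?thesis .
qed

lemma D_decomp: "D = D0 A D J + D1 A D J + DR A D J"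
proof -
  have "D = (\<Sum>b\<in>U. Jc b) ** D ** (\<Sum>d\<in>U. Jc d)" by (simp add: Q_sum)
  also have "\<dots> = (\<Sum>b\<in>U. \<Sum>d\<in>U. Jc b ** D ** Jc d)"
    by (rule sandwich)
  also have "\<dots> = D1 A D J + (\<Sum>b\<in>U. Jc b ** D ** Jc b)"
    by (simp add: sum_split_diag[OF U_fin] D1_eq)
  also have "(\<Sum>b\<in>U. Jc b ** D ** Jc b) = D0 A D J + DR A D J"
  proof -
    have t: "a ** (Jc b ** D ** Jc b) ** c = Dblock J D a b c b" if "a \<in> U" "b \<in> U" "c \<in> U" for a b c
      using PQ[of c b] that unfolding Dblock_def by (metis matrix_mul_assoc)
    have "(\<Sum>b\<in>U. Jc b ** D ** Jc b) = (\<Sum>b\<in>U. (\<Sum>a\<in>U. a) ** (Jc b ** D ** Jc b) ** (\<Sum>c\<in>U. c))"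
      by (simp add: U_sum)
    also have "\<dots> = (\<Sum>b\<in>U. \<Sum>a\<in>U. \<Sum>c\<in>U. a ** (Jc b ** D ** Jc b) ** c)"
      by (simp only: sandwich)
    also have "\<dots> = (\<Sum>a\<in>U. \<Sum>b\<in>U. \<Sum>c\<in>U. Dblock J D a b c b)"
      by (subst sum.swap) (intro sum.cong refl, simp add: t)
    also have "\<dots> = (\<Sum>a\<in>U. \<Sum>b\<in>U. (\<Sum>c\<in>U-{a}. Dblock J D a b c b) + Dblock J D a b a b)"
      using U_fin by (intro sum.cong refl) (simp add: sum.remove add.commute)
    also have "\<dots> = D0 A D J + DR A D J"
      by (simp add: D0_def DR_def sum.distrib)
    finally show ?thesis .
  qed
  finally show ?thesis by (simp add: add_ac)
qed

lemma JcDR: "Jc (DR A D J) = cscale eps' (DR A D J)"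
proof -
  have t: "Jc (Dblock J D a b a b) = cscale eps' (Dblock J D b a b a)" if "a \<in> U" "b \<in> U" for a b
  proof -
    have "Jc (Dblock J D a b a b) = Jc a ** b ** cscale eps' D ** Jc a ** b"
      by (simp add: Dblock_def Jc_mm' JJc JcD)
    also have "\<dots> = cscale eps' ((Jc a ** b) ** D ** (Jc a ** b))"
      by (simp add: cscale_mm_l cscale_mm_r matrix_mul_assoc)
    also have "\<dots> = cscale eps' ((b ** Jc a) ** D ** (b ** Jc a))"
      using PQ[of b a] that by simp
    also have "\<dots> = cscale eps' (Dblock J D b a b a)"
      by (simp add: Dblock_def matrix_mul_assoc)
    finally show ?thesis .
  qed
  have "Jc (DR A D J) = (\<Sum>a\<in>U. \<Sum>b\<in>U. cscale eps' (Dblock J D b a b a))"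
    unfolding DR_def Jc_sum' using t by (intro sum.cong refl) auto
  also have "\<dots> = cscale eps' (\<Sum>b\<in>U. \<Sum>a\<in>U. Dblock J D b a b a)"
    by (subst sum.swap) (simp add: cscale_sum)
  finally show ?thesis by (simp add: DR_def)
qed

end


lemma core_alg:
  fixes D0 D1 c e :: "'n::finite cop"
  assumes h1: "c ** D1 = D1 ** c" and h2: "e ** D0 = D0 ** e" and h3: "c ** e = e ** c"
    and h4: "D0 ** D1 = D1 ** D0"
  shows "commutator D0 c ** commutator D1 e = commutator D1 e ** commutator D0 c"
proof -
  define K where "K = D0 ** D1"
  note as = matrix_mul_assoc
  have a1: "D0 ** c ** (D1 ** e) = K ** (c ** e)"
  proof -
    have "D0 ** c ** (D1 ** e) = D0 ** (c ** D1) ** e" by (simp only: as)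
    also have "\<dots> = D0 ** (D1 ** c) ** e" by (simp only: h1)
    also have "\<dots> = K ** (c ** e)" unfolding K_def by (simp only: as)
    finally show ?thesis .
  qed
  have a2: "D0 ** c ** (e ** D1) = e ** K ** c"
  proof -
    have "D0 ** c ** (e ** D1) = D0 ** (c ** e) ** D1" by (simp only: as)
    also have "\<dots> = D0 ** (e ** c) ** D1" by (simp only: h3)
    also have "\<dots> = D0 ** e ** (c ** D1)" by (simp only: as)
    also have "\<dots> = D0 ** e ** (D1 ** c)" by (simp only: h1)
    also have "\<dots> = (D0 ** e) ** D1 ** c" by (simp only: as)
    also have "\<dots> = (e ** D0) ** D1 ** c" by (simp only: h2)
    also have "\<dots> = e ** K ** c" unfolding K_def by (simp only: as)
    finally show ?thesis .
  qed
  have a3: "c ** D0 ** (D1 ** e) = c ** K ** e" unfolding K_def by (simp only: as)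
  have a4: "c ** D0 ** (e ** D1) = c ** e ** K"
  proof -
    have "c ** D0 ** (e ** D1) = c ** (D0 ** e) ** D1" by (simp only: as)
    also have "\<dots> = c ** (e ** D0) ** D1" by (simp only: h2)
    also have "\<dots> = c ** e ** K" unfolding K_def by (simp only: as)
    finally show ?thesis .
  qed
  have b1: "D1 ** e ** (D0 ** c) = K ** (c ** e)"
  proof -
    have "D1 ** e ** (D0 ** c) = D1 ** (e ** D0) ** c" by (simp only: as)
    also have "\<dots> = D1 ** (D0 ** e) ** c" by (simp only: h2)
    also have "\<dots> = (D1 ** D0) ** (e ** c)" by (simp only: as)
    also have "\<dots> = (D0 ** D1) ** (c ** e)" by (simp only: h3 h4)
    finally show ?thesis unfolding K_def .
  qed
  have b2: "D1 ** e ** (c ** D0) = c ** K ** e"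
  proof -
    have "D1 ** e ** (c ** D0) = D1 ** (e ** c) ** D0" by (simp only: as)
    also have "\<dots> = D1 ** (c ** e) ** D0" by (simp only: h3)
    also have "\<dots> = (D1 ** c) ** e ** D0" by (simp only: as)
    also have "\<dots> = (c ** D1) ** e ** D0" by (simp only: h1)
    also have "\<dots> = c ** D1 ** (e ** D0)" by (simp only: as)
    also have "\<dots> = c ** D1 ** (D0 ** e)" by (simp only: h2)
    also have "\<dots> = c ** (D1 ** D0) ** e" by (simp only: as)
    also have "\<dots> = c ** (D0 ** D1) ** e" by (simp only: h4)
    finally show ?thesis unfolding K_def .
  qed
  have b3: "e ** D1 ** (D0 ** c) = e ** K ** c"
  proof -
    have "e ** D1 ** (D0 ** c) = e ** (D1 ** D0) ** c" by (simp only: as)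
    also have "\<dots> = e ** (D0 ** D1) ** c" by (simp only: h4)
    finally show ?thesis unfolding K_def .
  qed
  have b4: "e ** D1 ** (c ** D0) = c ** e ** K"
  proof -
    have "e ** D1 ** (c ** D0) = e ** (D1 ** c) ** D0" by (simp only: as)
    also have "\<dots> = e ** (c ** D1) ** D0" by (simp only: h1)
    also have "\<dots> = (e ** c) ** (D1 ** D0)" by (simp only: as)
    also have "\<dots> = (c ** e) ** (D0 ** D1)" by (simp only: h3 h4)
    finally show ?thesis unfolding K_def .
  qed
  have "commutator D0 c ** commutator D1 e
      = D0 ** c ** (D1 ** e) - D0 ** c ** (e ** D1) - (c ** D0 ** (D1 ** e) - c ** D0 ** (e ** D1))"
    by (simp add: commutator_def mm_ldiff mm_rdiff)
  also have "\<dots> = D1 ** e ** (D0 ** c) - D1 ** e ** (c ** D0) - (e ** D1 ** (D0 ** c) - e ** D1 ** (c ** D0))"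
    by (simp add: a1 a2 a3 a4 b1 b2 b3 b4 algebra_simps)
  also have "\<dots> = commutator D1 e ** commutator D0 c"
    by (simp add: commutator_def mm_ldiff mm_rdiff)
  finally show ?thesis .
qed

lemma adj_commutator: "adj D = D \<Longrightarrow> adj (commutator D b) = cscale (-1) (commutator D (adj b))"
  by (simp add: commutator_def adj_diff adj_mm cscale_m1)

lemma comm_sum_l: "(\<And>i. i \<in> S \<Longrightarrow> f i ** (M::'n::finite cop) = M ** f i) \<Longrightarrow>
   (\<Sum>i\<in>S. (f i::'n cop)) ** M = M ** (\<Sum>i\<in>S. f i)"
  by (simp add: mm_sum_l mm_sum_r)

lemma comm_sum_r: "(\<And>i. i \<in> S \<Longrightarrow> (M::'n::finite cop) ** f i = f i ** M) \<Longrightarrow>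
   M ** (\<Sum>i\<in>S. (f i::'n cop)) = (\<Sum>i\<in>S. f i) ** M"
  by (simp add: mm_sum_l mm_sum_r)

lemma commutator_split1: "Y ** c = c ** Y \<Longrightarrow> Z ** c = c ** Z \<Longrightarrow>
   commutator ((X::'n::finite cop) + Y + Z) c = commutator X c"
  by (simp add: commutator_def mm_ldist mm_rdist)

lemma commutator_split2: "X ** c = c ** X \<Longrightarrow> Z ** c = c ** Z \<Longrightarrow>
   commutator ((X::'n::finite cop) + Y + Z) c = commutator Y c"
  by (simp add: commutator_def mm_ldist mm_rdist)

locale rst2 = rst +
  assumes DRc: "\<forall>a\<in>A. DR A D J ** a = a ** DR A D J"
begin

abbreviation "G \<equiv> A \<union> {a ** commutator D b | a b. a \<in> A \<and> b \<in> A}"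

lemma CliffD_G: "CliffD A D = star_alg_gen G" by (simp add: CliffD_def)

lemma AC_Cliff: "x \<in> AC A \<Longrightarrow> x \<in> CliffD A D"
  unfolding AC_def CliffD_G by (rule sag_mono) auto

lemma comD_Cliff: "b \<in> AC A \<Longrightarrow> commutator D b \<in> CliffD A D"
proof (unfold AC_def, induction rule: star_alg_gen.induct)
  case (gen a)
  then have "mat 1 ** commutator D a \<in> G" using A_1 by blast
  then show ?case unfolding CliffD_G by (simp add: star_alg_gen.gen)
next
  case zero then show ?case by (simp add: commutator_def CliffD_G star_alg_gen.zero)
next
  case (add a b) then show ?case by (simp add: commutator_add CliffD_G star_alg_gen.add)
next
  case (scale a c) then show ?case by (simp add: comm_D_cscale CliffD_G star_alg_gen.scale)
next
  case (mult a b)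
  have "a \<in> CliffD A D" "b \<in> CliffD A D" using mult AC_Cliff by (auto simp: AC_def)
  then show ?case using mult unfolding commutator_mm CliffD_G
    by (simp add: star_alg_gen.add star_alg_gen.mult)
next
  case (adj a) then show ?case
    by (simp add: commutator_adj[OF Dsa] CliffD_G star_alg_gen.adj star_alg_gen.scale)
qed

lemma D0_commJ: "b \<in> AC A \<Longrightarrow> D0 A D J ** Jc b = Jc b ** D0 A D J"
  unfolding D0_eq by (intro comm_sum_l) (auto simp: X_comm)

lemma D1_commA: "a \<in> AC A \<Longrightarrow> a ** D1 A D J = D1 A D J ** a"
  unfolding D1_eq by (intro comm_sum_r) (auto simp: Y_comm)

lemma DR_commJ: "b \<in> A \<Longrightarrow> DR A D J ** Jc b = Jc b ** DR A D J"
proof -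
  assume b: "b \<in> A"
  then have "Jc (DR A D J ** b) = Jc (b ** DR A D J)" using DRc by simp
  then have "cscale eps' (DR A D J ** Jc b) = cscale eps' (Jc b ** DR A D J)"
    by (simp add: Jc_mm' JcDR cscale_mm_l cscale_mm_r)
  then show ?thesis using cscale_cancel eps'_nz by blast
qed

lemma comD_A: "c \<in> A \<Longrightarrow> commutator D c = commutator (D0 A D J) c"
proof -
  assume c: "c \<in> A"
  have 1: "c ** D1 A D J = D1 A D J ** c" using D1_commA A_AC c by blast
  have 2: "c ** DR A D J = DR A D J ** c" using DRc c by simp
  have "commutator D c = commutator (D0 A D J + D1 A D J + DR A D J) c"
    by (rule arg_cong[where f="\<lambda>M. commutator M c"], rule D_decomp)
  then show ?thesis using commutator_split1[of "D1 A D J" c "DR A D J"] 1 2 by simp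
qed

lemma comD_J: "b \<in> A \<Longrightarrow> commutator D (Jc b) = commutator (D1 A D J) (Jc b)"
proof -
  assume b: "b \<in> A"
  have 1: "D0 A D J ** Jc b = Jc b ** D0 A D J" using D0_commJ A_AC b by blast
  have 2: "DR A D J ** Jc b = Jc b ** DR A D J" using DR_commJ b by simp
  have "commutator D (Jc b) = commutator (D0 A D J + D1 A D J + DR A D J) (Jc b)"
    by (rule arg_cong[where f="\<lambda>M. commutator M (Jc b)"], rule D_decomp)
  then show ?thesis using commutator_split2[of "D0 A D J" "Jc b" "DR A D J"] 1 2 by simp
qed

lemma core:
  assumes K: "D0 A D J ** D1 A D J = D1 A D J ** D0 A D J" and b: "b \<in> A" and c: "c \<in> A"
  shows "commutator D c ** commutator D (Jc b) = commutator D (Jc b) ** commutator D c"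
  unfolding comD_A[OF c] comD_J[OF b]
proof (rule core_alg[OF _ _ _ K])
  show "c ** D1 A D J = D1 A D J ** c" using D1_commA A_AC c by blast
  show "Jc b ** D0 A D J = D0 A D J ** Jc b" using D0_commJ A_AC b by metis
  show "c ** Jc b = Jc b ** c" using zeroA b c by blast
qed

definition good where "good y \<longleftrightarrow> (\<forall>g\<in>G. g ** y = y ** g)"

lemma good_mm: assumes "good y" "good y'" shows "good (y ** y')"
  unfolding good_def
proof
  fix g assume g: "g \<in> G"
  have 1: "g ** y = y ** g" and 2: "g ** y' = y' ** g" using assms g good_def by auto
  have "g ** (y ** y') = (g ** y) ** y'" by (simp only: matrix_mul_assoc)
  also have "\<dots> = y ** (g ** y')" by (simp only: 1 matrix_mul_assoc)
  also have "\<dots> = (y ** y') ** g" by (simp only: 2 matrix_mul_assoc)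
  finally show "g ** (y ** y') = (y ** y') ** g" .
qed
lemma good_cscale: "good y \<Longrightarrow> good (cscale k y)"
  unfolding good_def by (simp add: cscale_mm_l cscale_mm_r)

lemma good_Jc: "b \<in> A \<Longrightarrow> good (Jc b)"
  unfolding good_def
proof (intro ballI)
  fix g assume b: "b \<in> A" and g: "g \<in> G"
  show "g ** Jc b = Jc b ** g"
  proof (cases "g \<in> A")
    case True then show ?thesis using zeroA b by simp
  next
    case False
    then obtain a c where g: "g = a ** commutator D c" "a \<in> A" "c \<in> A" using g by blast
    have 1: "a ** Jc b = Jc b ** a" using zeroA g b by simp
    have 2: "commutator D c ** Jc b = Jc b ** commutator D c" using firstA g b by simp
    show ?thesis unfolding g(1) by (metis 1 2 matrix_mul_assoc)
  qed
qed

lemma good_cJ: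
  assumes K: "D0 A D J ** D1 A D J = D1 A D J ** D0 A D J"
  shows "b \<in> A \<Longrightarrow> good (commutator D (Jc b))"
  unfolding good_def
proof (intro ballI)
  fix g assume b: "b \<in> A" and g: "g \<in> G"
  show "g ** commutator D (Jc b) = commutator D (Jc b) ** g"
  proof (cases "g \<in> A")
    case True then show ?thesis using L4 A_AC b by simp
  next
    case False
    then obtain a c where g: "g = a ** commutator D c" "a \<in> A" "c \<in> A" using g by blast
    have 1: "a ** commutator D (Jc b) = commutator D (Jc b) ** a" using L4 A_AC g b by simp
    have 2: "commutator D c ** commutator D (Jc b) = commutator D (Jc b) ** commutator D c"
      using core[OF K b g(3)] .
    show ?thesis unfolding g(1) by (metis 1 2 matrix_mul_assoc)
  qed
qed

lemma adj_opp: "adj (opp J x) = Jc x"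
  by (simp add: opp_def Jc_adj')

lemma Jc_commD: "Jc (commutator D b) = cscale eps' (commutator D (Jc b))"
  by (simp add: Jc_comm JcD commutator_cscale_l)

lemma good_S1:
  assumes K: "D0 A D J ** D1 A D J = D1 A D J ** D0 A D J" and h: "h \<in> G"
  shows "good (opp J h) \<and> good (adj (opp J h))"
proof (cases "h \<in> A")
  case True
  then show ?thesis by (simp add: Jc_adj' opp_def good_Jc A_adj)
next
  case False
  then obtain a b where h: "h = a ** commutator D b" "a \<in> A" "b \<in> A" using h by blast
  have "opp J h = Jc (cscale (-1) (commutator D (adj b))) ** Jc (adj a)"
    by (simp add: h opp_def adj_mm adj_commutator[OF Dsa] Jc_mm')
  also have "\<dots> = cscale (-1) (cscale eps' (commutator D (Jc (adj b)))) ** Jc (adj a)"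
    by (simp add: Jc_cscale' Jc_commD)
  finally have 1: "good (opp J h)"
    using good_mm good_cscale good_cJ[OF K] good_Jc A_adj h by simp
  have "adj (opp J h) = Jc a ** cscale eps' (commutator D (Jc b))"
    by (simp add: adj_opp h Jc_mm' Jc_commD)
  then have 2: "good (adj (opp J h))"
    using good_mm good_cscale good_cJ[OF K] good_Jc h by simp
  show ?thesis using 1 2 by simp
qed

lemma dir2:
  assumes K: "D0 A D J ** D1 A D J = D1 A D J ** D0 A D J"
  shows "second_order_condition A D J"
proof -
  define S1 where "S1 = opp J ` G \<union> adj ` opp J ` G"
  have S1g: "\<forall>y\<in>S1. good y" using good_S1[OF K] S1_def by auto
  have S1a: "\<forall>y\<in>S1. adj y \<in> S1"
  proof
    fix y assume "y \<in> S1"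
    then consider (a) g where "g \<in> G" "y = opp J g" | (b) g where "g \<in> G" "y = adj (opp J g)"
      unfolding S1_def by blast
    then show "adj y \<in> S1"
    proof cases
      case a then show ?thesis unfolding S1_def by blast
    next
      case b then show ?thesis unfolding S1_def by simp
    qed
  qed
  have A: "\<forall>x\<in>CliffD A D. \<forall>y\<in>S1. x ** y = y ** x"
  proof (intro ballI)
    fix x y assume "x \<in> CliffD A D" "y \<in> S1"
    then show "x ** y = y ** x"
      using comm_closure2[OF S1a, of G x y] S1g unfolding good_def CliffD_G by blast
  qed
  have Ca: "\<forall>y\<in>CliffD A D. adj y \<in> CliffD A D" by (simp add: CliffD_G star_alg_gen.adj)
  have B: "y ** x = x ** y" if "y \<in> star_alg_gen S1" "x \<in> CliffD A D" for x y
    using comm_closure2[OF Ca, of S1 y x] A that by auto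
  show ?thesis unfolding second_order_condition_def
  proof (intro ballI)
    fix x y assume x: "x \<in> CliffD A D" and "y \<in> opp J ` CliffD A D"
    then obtain z where z: "z \<in> CliffD A D" "y = opp J z" by blast
    have "y \<in> star_alg_gen (opp J ` G)" using z opp_sag[OF aJ] CliffD_G by simp
    then have "y \<in> star_alg_gen S1" by (rule sag_mono[rotated]) (auto simp: S1_def)
    then show "x ** y = y ** x" using B x by simp
  qed
qed

lemma dir1:
  assumes so: "second_order_condition A D J"
  shows "D0 A D J ** D1 A D J = D1 A D J ** D0 A D J"
proof -
  have XY: "(P ** D ** P') ** (Jc R ** D ** Jc R') = (Jc R ** D ** Jc R') ** (P ** D ** P')"
    if P: "P \<in> U" "P' \<in> U" "P \<noteq> P'" and R: "R \<in> U" "R' \<in> U" "R \<noteq> R'" for P P' R R'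
  proof -
    have x: "P ** commutator D P' \<in> CliffD A D"
      using P AC_Cliff comD_Cliff U_AC by (simp add: CliffD_G star_alg_gen.mult)
    have "R' ** commutator D R \<in> CliffD A D"
      using R AC_Cliff comD_Cliff U_AC by (simp add: CliffD_G star_alg_gen.mult)
    then have y: "opp J (R' ** commutator D R) \<in> opp J ` CliffD A D" by blast
    have "opp J (R' ** commutator D R) = cscale (-1) (Jc (commutator D R ** R'))"
      using R by (simp add: opp_def adj_mm adj_commutator[OF Dsa] U_sa cscale_mm_l Jc_cscale')
    also have "commutator D R ** R' = - (R ** D ** R')"
    proof -
      have "commutator D R ** R' = D ** (R ** R') - R ** D ** R'"
        by (simp add: commutator_def mm_rdiff matrix_mul_assoc)
      then show ?thesis using U_orth[OF R] by simp
    qed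
    also have "cscale (-1) (Jc (- (R ** D ** R'))) = cscale eps' (Jc R ** D ** Jc R')"
    proof -
      have "Jc (- (R ** D ** R')) = - Jc (R ** D ** R')"
        using Jc_diff'[of 0 "R ** D ** R'"] by simp
      then show ?thesis by (simp add: cscale_m1 Jc_mm' JcD cscale_mm_l cscale_mm_r)
    qed
    finally have oe: "opp J (R' ** commutator D R) = cscale eps' (Jc R ** D ** Jc R')" .
    have "(P ** commutator D P') ** opp J (R' ** commutator D R) = opp J (R' ** commutator D R) ** (P ** commutator D P')"
      using so x y unfolding second_order_condition_def by blast
    then have "(P ** D ** P') ** cscale eps' (Jc R ** D ** Jc R') = cscale eps' (Jc R ** D ** Jc R') ** (P ** D ** P')"
      unfolding oe X_eq[OF P] .
    then have "cscale eps' ((P ** D ** P') ** (Jc R ** D ** Jc R')) = cscale eps' ((Jc R ** D ** Jc R') ** (P ** D ** P'))"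
      by (simp only: cscale_mm_l cscale_mm_r)
    then show ?thesis using cscale_cancel eps'_nz by blast
  qed
  have XD1: "(P ** D ** P') ** D1 A D J = D1 A D J ** (P ** D ** P')"
    if P: "P \<in> U" "P' \<in> U" "P \<noteq> P'" for P P'
    unfolding D1_eq
  proof (intro comm_sum_r)
    fix b d assume "b \<in> U" "d \<in> U - {b}"
    then show "(P ** D ** P') ** (Jc b ** D ** Jc d) = (Jc b ** D ** Jc d) ** (P ** D ** P')"
      using XY[OF P, of b d] by auto
  qed
  show ?thesis
    unfolding D0_eq
  proof (intro comm_sum_l)
    fix a c assume "a \<in> U" "c \<in> U - {a}"
    then show "(a ** D ** c) ** D1 A D J = D1 A D J ** (a ** D ** c)"
      using XD1[of a c] by auto
  qed
qed

end


theorem proposition9: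
  fixes A :: "'n::finite cop set" and D :: "'n cop" and J :: "'n hvec \<Rightarrow> 'n hvec"
    and eps eps' :: complex and grading :: "('n cop \<times> complex) option"
  assumes "real_spectral_triple A D J eps eps' grading"
    and "\<forall>a\<in>A. DR A D J ** a = a ** DR A D J"
  shows "second_order_condition A D J \<longleftrightarrow> D0 A D J ** D1 A D J = D1 A D J ** D0 A D J"
proof -
  interpret rst2 A D J eps eps' grading
    by (intro rst2.intro rst.intro rst2_axioms.intro assms)
  show ?thesis using dir1 dir2 by blast
qed

end
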